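(* Let $K$ be a positive semiring and let $H=(V,E)$ be a hypergraph with the local-to-global consistency property for $K$-relations. Then for every $W\subseteq V$, the induced hypergraph $H[W]$ also has the local-to-global consistency property for $K$-relations.
   Context: Every attribute has a nonempty domain $\mathrm{Dom}(A)$. A commutative semiring $(K,+,\cdot,0,1)$ with $0\neq 1$ is positive if $a+b=0$ implies $a=b=0$, and $ab=0$ implies $a=0$ or $b=0$. For a finite set of attributes $X$, $\mathrm{Tup}(X)$ is the set of maps assigning to each $A\in X$ an element of $\mathrm{Dom}(A)$; $t[Y]$ is restriction; $XY=X\cup Y$. A $K$-relation over $X$ is a map $R:\mathrm{Tup}(X)\to K$ with finite support $R'=\{t:R(t)\neq0\}$; its marginal on $Y\subseteq X$ is $R[Y](u)=\sum_{r\in R',r[Y]=u}R(r)$. $R\equiv S$ means $aR=bS$ for nonzero $a,b\in K$. $R$ over $X$ and $S$ over $Y$ are consistent if some $K$-relation $T$ over $XY$ has $R\equiv T[X]$, $S\equiv T[Y]$. A collection $R_1,\dots,R_m$ ($R_i$ over $X_i$) is pairwise consistent if every two members are consistent, and globally consistent if some $K$-relation $T$ over $X_1\cup\cdots\cup X_m$ satisfies $R_i\equiv T[X_i]$ for all $i$. A hypergraph $H=(V,E)$ (finite set $V$ of attributes, hyperedges nonempty subsets of $V$) with hyperedges $X_1,\dots,X_m$ has the local-to-global consistency property for $K$-relations if every pairwise consistent collection of $K$-relations $R_1,\ldots,R_m$ with $R_i$ over $X_i$ is globally consistent. For $W\subseteq V$, $H[W]=(W,\{X\cap W:X\in E\}\setminus\{\emptyset\})$.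 *)

theory Defs
  imports Main "HOL-Library.FuncSet"
begin

text \<open>Attributes have type 'a, domain values type 'v; Dom assigns each attribute its domain.
Tuples over X are the extensional functions in PiE X Dom; restriction is 'restrict'.\<close>

definition positive_semiring :: "'k::comm_semiring_1 itself \<Rightarrow> bool" where
  "positive_semiring _ \<longleftrightarrow>
     (\<forall>a b::'k. a + b = 0 \<longrightarrow> a = 0 \<and> b = 0) \<and>
     (\<forall>a b::'k. a * b = 0 \<longrightarrow> a = 0 \<or> b = 0)"

definition Tup :: "('a \<Rightarrow> 'v set) \<Rightarrow> 'a set \<Rightarrow> ('a \<Rightarrow> 'v) set" where
  "Tup Dom X = PiE X Dom"

definition supp :: "(('a \<Rightarrow> 'v) \<Rightarrow> 'k::zero) \<Rightarrow> ('a \<Rightarrow> 'v) set" where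
  "supp R = {t. R t \<noteq> 0}"

definition is_krel :: "('a \<Rightarrow> 'v set) \<Rightarrow> 'a set \<Rightarrow> (('a \<Rightarrow> 'v) \<Rightarrow> 'k::zero) \<Rightarrow> bool" where
  "is_krel Dom X R \<longleftrightarrow> supp R \<subseteq> Tup Dom X \<and> finite (supp R)"

definition marginal :: "(('a \<Rightarrow> 'v) \<Rightarrow> 'k::comm_monoid_add) \<Rightarrow> 'a set \<Rightarrow> ('a \<Rightarrow> 'v) \<Rightarrow> 'k" where
  "marginal R Y u = (\<Sum>r\<in>{r\<in>supp R. restrict r Y = u}. R r)"

definition krel_equiv :: "(('a \<Rightarrow> 'v) \<Rightarrow> 'k::semiring_0) \<Rightarrow> (('a \<Rightarrow> 'v) \<Rightarrow> 'k) \<Rightarrow> bool" where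
  "krel_equiv R S \<longleftrightarrow> (\<exists>a b. a \<noteq> 0 \<and> b \<noteq> 0 \<and> (\<forall>t. a * R t = b * S t))"

definition consistent ::
  "('a \<Rightarrow> 'v set) \<Rightarrow> 'a set \<Rightarrow> (('a \<Rightarrow> 'v) \<Rightarrow> 'k::comm_semiring_1) \<Rightarrow> 'a set \<Rightarrow> (('a \<Rightarrow> 'v) \<Rightarrow> 'k) \<Rightarrow> bool" where
  "consistent Dom X R Y S \<longleftrightarrow>
     (\<exists>T. is_krel Dom (X \<union> Y) T \<and> krel_equiv R (marginal T X) \<and> krel_equiv S (marginal T Y))"

definition hypergraph :: "'a set \<Rightarrow> 'a set set \<Rightarrow> bool" where
  "hypergraph V E \<longleftrightarrow> finite V \<and> (\<forall>X\<in>E. X \<noteq> {} \<and> X \<subseteq> V)"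

definition local_to_global ::
  "'k::comm_semiring_1 itself \<Rightarrow> ('a \<Rightarrow> 'v set) \<Rightarrow> 'a set \<Rightarrow> 'a set set \<Rightarrow> bool" where
  "local_to_global _ Dom V E \<longleftrightarrow>
     (\<forall>Rs :: 'a set \<Rightarrow> ('a \<Rightarrow> 'v) \<Rightarrow> 'k.
        (\<forall>X\<in>E. is_krel Dom X (Rs X)) \<longrightarrow>
        (\<forall>X\<in>E. \<forall>Y\<in>E. consistent Dom X (Rs X) Y (Rs Y)) \<longrightarrow>
        (\<exists>T. is_krel Dom (\<Union>E) T \<and> (\<forall>X\<in>E. krel_equiv (Rs X) (marginal T X))))"

definition induced_edges :: "'a set set \<Rightarrow> 'a set \<Rightarrow> 'a set set" where
  "induced_edges E W = (\<lambda>X. X \<inter> W) ` E - {{}}"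

end

theory Submission
  imports Defs
begin

lemma marginal_superset:
  assumes "finite S" "supp R \<subseteq> S"
  shows "marginal R Y u = (\<Sum>r\<in>{r\<in>S. restrict r Y = u}. R r)"
  unfolding marginal_def
  by (rule sum.mono_neutral_left) (use assms in \<open>auto simp: supp_def\<close>)

lemma supp_marginal: "supp (marginal R Y) \<subseteq> (\<lambda>r. restrict r Y) ` supp R"
proof
  fix u assume "u \<in> supp (marginal R Y)"
  then have "marginal R Y u \<noteq> 0" unfolding supp_def by simp
  then have "{r\<in>supp R. restrict r Y = u} \<noteq> {}"
    unfolding marginal_def by force
  then show "u \<in> (\<lambda>r. restrict r Y) ` supp R" by blast
qed

lemma finite_supp_marginal: "finite (supp R) \<Longrightarrow> finite (supp (marginal R Y))"
  by (rule finite_subset[OF supp_marginal]) simp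

lemma marginal_krel:
  assumes "is_krel Dom X T" "Y \<subseteq> X"
  shows "is_krel Dom Y (marginal T Y)"
proof -
  have "(\<lambda>r. restrict r Y) ` supp T \<subseteq> Tup Dom Y"
  proof
    fix u assume "u \<in> (\<lambda>r. restrict r Y) ` supp T"
    then obtain r where r: "r \<in> supp T" "u = restrict r Y" by blast
    then have "r \<in> Pi\<^sub>E X Dom" using assms(1) by (auto simp: is_krel_def Tup_def)
    then show "u \<in> Tup Dom Y" using r(2) assms(2) by (auto simp: Tup_def PiE_iff)
  qed
  moreover have "finite (supp (marginal T Y))"
    using assms(1) finite_supp_marginal unfolding is_krel_def by blast
  moreover have "supp (marginal T Y) \<subseteq> Tup Dom Y"
    using supp_marginal[of T Y] calculation(1) by (rule order_trans)
  ultimately show ?thesis unfolding is_krel_def by simp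
qed

lemma marginal_trans:
  assumes fin: "finite (supp T)" and ZY: "Z \<subseteq> Y"
  shows "marginal (marginal T Y) Z = marginal T Z"
proof
  fix v
  let ?f = "\<lambda>r. restrict r Y"
  let ?S = "supp T"
  have rr: "restrict (restrict r Y) Z = restrict r Z" for r :: "'a \<Rightarrow> 'b"
    using ZY by (intro ext) (auto simp: restrict_def)
  have "marginal (marginal T Y) Z v = (\<Sum>u\<in>{u\<in>?f ` ?S. restrict u Z = v}. marginal T Y u)"
    by (rule marginal_superset) (use fin supp_marginal in auto)
  also have "\<dots> = (\<Sum>u\<in>{u\<in>?f ` ?S. restrict u Z = v}. sum T {x. x \<in> {r\<in>?S. restrict r Z = v} \<and> ?f x = u})"
  proof (rule sum.cong[OF refl])
    fix u assume "u \<in> {u\<in>?f ` ?S. restrict u Z = v}"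
    then have "{x. x \<in> {r\<in>?S. restrict r Z = v} \<and> ?f x = u} = {r\<in>?S. restrict r Y = u}"
      using rr by auto (metis rr)+
    then show "marginal T Y u = sum T {x. x \<in> {r\<in>?S. restrict r Z = v} \<and> ?f x = u}"
      unfolding marginal_def by simp
  qed
  also have "\<dots> = sum T {r\<in>?S. restrict r Z = v}"
    by (rule sum.group) (use fin rr in auto)
  also have "\<dots> = marginal T Z v" unfolding marginal_def by simp
  finally show "marginal (marginal T Y) Z v = marginal T Z v" .
qed

lemma marginal_scale:
  fixes R :: "('a \<Rightarrow> 'v) \<Rightarrow> 'k::comm_semiring_1"
  assumes "finite (supp R)"
  shows "marginal (\<lambda>t. a * R t) Y u = a * marginal R Y u"
proof -
  have "marginal (\<lambda>t. a * R t) Y u = (\<Sum>r\<in>{r\<in>supp R. restrict r Y = u}. a * R r)"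
    by (rule marginal_superset) (use assms in \<open>auto simp: supp_def\<close>)
  then show ?thesis by (simp add: marginal_def sum_distrib_left)
qed

lemma equiv_marginal:
  fixes R S :: "('a \<Rightarrow> 'v) \<Rightarrow> 'k::comm_semiring_1"
  assumes "finite (supp R)" "finite (supp S)" "krel_equiv R S"
  shows "krel_equiv (marginal R Y) (marginal S Y)"
proof -
  obtain a b where ab: "a \<noteq> 0" "b \<noteq> 0" "\<forall>t. a * R t = b * S t"
    using assms(3) unfolding krel_equiv_def by blast
  have "(\<lambda>t. a * R t) = (\<lambda>t. b * S t)" using ab by auto
  then have "a * marginal R Y u = b * marginal S Y u" for u
    using marginal_scale[OF assms(1), of a Y u] marginal_scale[OF assms(2), of b Y u] by simp
  then show ?thesis using ab unfolding krel_equiv_def by blast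
qed

lemma marginal_self:
  assumes "is_krel Dom X T"
  shows "marginal T X = T"
proof
  fix u
  have "{r\<in>supp T. restrict r X = u} = {r\<in>supp T. r = u}"
    using assms by (auto simp: is_krel_def Tup_def PiE_def extensional_restrict)
  also have "\<dots> = (if T u = 0 then {} else {u})" by (auto simp: supp_def)
  finally show "marginal T X u = T u" unfolding marginal_def by auto
qed

lemma sum_nonzero:
  fixes f :: "'b \<Rightarrow> 'k::comm_semiring_1"
  assumes pos: "positive_semiring TYPE('k)"
  shows "finite A \<Longrightarrow> A \<noteq> {} \<Longrightarrow> \<forall>x\<in>A. f x \<noteq> 0 \<Longrightarrow> sum f A \<noteq> 0"
proof (induction A rule: finite_ne_induct)
  case (singleton x) then show ?case by simp
next
  case (insert x F)
  have pa: "\<And>a b::'k. a + b = 0 \<Longrightarrow> a = 0"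
    using pos unfolding positive_semiring_def by blast
  have "f x \<noteq> 0" using insert by simp
  then have "f x + sum f F \<noteq> 0" using pa by blast
  then show ?case using insert by simp
qed

lemma marginal_nonzero:
  fixes T :: "('a \<Rightarrow> 'v) \<Rightarrow> 'k::comm_semiring_1"
  assumes pos: "positive_semiring TYPE('k)" and fin: "finite (supp T)" and r: "r \<in> supp T"
  shows "marginal T Z (restrict r Z) \<noteq> 0"
  unfolding marginal_def
  by (rule sum_nonzero[OF pos]) (use fin r in \<open>auto simp: supp_def\<close>)

lemma zero_cons:
  fixes R S :: "('a \<Rightarrow> 'v) \<Rightarrow> 'k::comm_semiring_1"
  assumes pos: "positive_semiring TYPE('k)" and c: "consistent Dom X R Y S" and z: "supp R = {}"
  shows "supp S = {}"
proof -
  obtain T where T: "is_krel Dom (X \<union> Y) T" "krel_equiv R (marginal T X)" "krel_equiv S (marginal T Y)"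
    using c unfolding consistent_def by blast
  obtain a b where ab: "a \<noteq> 0" "b \<noteq> 0" "\<forall>t. a * R t = b * marginal T X t"
    using T(2) unfolding krel_equiv_def by blast
  obtain c e where ce: "c \<noteq> 0" "e \<noteq> 0" "\<forall>t. c * S t = e * marginal T Y t"
    using T(3) unfolding krel_equiv_def by blast
  have fin: "finite (supp T)" using T(1) by (simp add: is_krel_def)
  have nzd: "\<And>x y::'k. x * y = 0 \<Longrightarrow> x = 0 \<or> y = 0"
    using pos unfolding positive_semiring_def by blast
  have "marginal T X t = 0" for t
  proof -
    have "R t = 0" using z unfolding supp_def by blast
    then have "b * marginal T X t = 0" using ab(3)[rule_format, of t] by simp
    then show ?thesis using nzd ab(2) by blast
  qed
  then have sT: "supp T = {}" using marginal_nonzero[OF pos fin] by blast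
  then have "marginal T Y t = 0" for t unfolding marginal_def by simp
  then have "c * S t = 0" for t using ce(3) by simp
  then have "S t = 0" for t using nzd ce(1) by blast
  then show ?thesis by (simp add: supp_def)
qed

lemma consistent_sym: "consistent Dom X R Y S \<Longrightarrow> consistent Dom Y S X R"
  unfolding consistent_def by (simp add: sup_commute) blast


definition ext0 :: "('a \<Rightarrow> 'v) \<Rightarrow> 'a set \<Rightarrow> 'a set \<Rightarrow> ('a \<Rightarrow> 'v) \<Rightarrow> 'a \<Rightarrow> 'v" where
  "ext0 d W X u = (\<lambda>A. if A \<in> X then (if A \<in> W then u A else d A) else undefined)"

definition lift :: "('a \<Rightarrow> 'v set) \<Rightarrow> ('a \<Rightarrow> 'v) \<Rightarrow> 'a set \<Rightarrow> 'a set \<Rightarrow> (('a \<Rightarrow> 'v) \<Rightarrow> 'k::zero) \<Rightarrow> ('a \<Rightarrow> 'v) \<Rightarrow> 'k" where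
  "lift Dom d W X R t = (if t \<in> Tup Dom X \<and> (\<forall>A\<in>X-W. t A = d A) then R (restrict t (X \<inter> W)) else 0)"

lemma ext0_Tup:
  assumes d: "\<forall>A. d A \<in> Dom A" and u: "u \<in> Tup Dom (X \<inter> W)"
  shows "ext0 d W X u \<in> Tup Dom X"
  using assms by (auto simp: Tup_def PiE_iff ext0_def extensional_def)

lemma restrict_ext0:
  assumes u: "u \<in> Tup Dom (X \<inter> W)"
  shows "restrict (ext0 d W X u) (X \<inter> W) = u"
proof
  fix A show "restrict (ext0 d W X u) (X \<inter> W) A = u A"
    using u PiE_arb[of u "X \<inter> W" Dom A] by (auto simp: Tup_def ext0_def)
qed

lemma ext0_restrict:
  assumes t: "t \<in> Tup Dom X" and a: "\<forall>A\<in>X-W. t A = d A"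
  shows "ext0 d W X (restrict t (X \<inter> W)) = t"
proof
  fix A show "ext0 d W X (restrict t (X \<inter> W)) A = t A"
    using t a PiE_arb[of t X Dom A] by (auto simp: Tup_def ext0_def)
qed

lemma ext0_agrees: "\<forall>A\<in>X-W. ext0 d W X u A = d A"
  by (auto simp: ext0_def)

lemma lift_ext0:
  assumes d: "\<forall>A. d A \<in> Dom A" and u: "u \<in> Tup Dom (X \<inter> W)"
  shows "lift Dom d W X R (ext0 d W X u) = R u"
  using ext0_Tup[OF d u] restrict_ext0[OF u] ext0_agrees[of X W d u]
  unfolding lift_def by simp

lemma inj_ext0: "inj_on (ext0 d W X) (Tup Dom (X \<inter> W))"
  by (metis inj_onI restrict_ext0)

lemma supp_lift:
  assumes d: "\<forall>A. d A \<in> Dom A" and R: "supp R \<subseteq> Tup Dom (X \<inter> W)"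
  shows "supp (lift Dom d W X R) = ext0 d W X ` supp R"
proof
  show "supp (lift Dom d W X R) \<subseteq> ext0 d W X ` supp R"
  proof
    fix t assume "t \<in> supp (lift Dom d W X R)"
    then have t: "t \<in> Tup Dom X" "\<forall>A\<in>X-W. t A = d A" "R (restrict t (X \<inter> W)) \<noteq> 0"
      unfolding supp_def lift_def by (auto split: if_splits)
    then have "restrict t (X \<inter> W) \<in> supp R" by (simp add: supp_def)
    moreover have "t = ext0 d W X (restrict t (X \<inter> W))" using ext0_restrict[OF t(1,2)] by simp
    ultimately show "t \<in> ext0 d W X ` supp R" by blast
  qed
next
  show "ext0 d W X ` supp R \<subseteq> supp (lift Dom d W X R)"
  proof
    fix t assume "t \<in> ext0 d W X ` supp R"
    then obtain u where u: "u \<in> supp R" "t = ext0 d W X u" by blast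
    then have "u \<in> Tup Dom (X \<inter> W)" using R by blast
    then have "lift Dom d W X R t = R u" using lift_ext0[OF d] u(2) by simp
    then show "t \<in> supp (lift Dom d W X R)" using u(1) by (simp add: supp_def)
  qed
qed

lemma krel_lift:
  assumes d: "\<forall>A. d A \<in> Dom A" and R: "is_krel Dom (X \<inter> W) R"
  shows "is_krel Dom X (lift Dom d W X R)"
proof -
  have s: "supp (lift Dom d W X R) = ext0 d W X ` supp R"
    using supp_lift[OF d, of R X W] R unfolding is_krel_def by blast
  have "ext0 d W X ` supp R \<subseteq> Tup Dom X"
    using ext0_Tup[OF d] R unfolding is_krel_def by blast
  then show ?thesis using s R unfolding is_krel_def by simp
qed

lemma key_ext0:
  assumes u: "u \<in> Tup Dom (Z \<inter> W)" and XZ: "X \<subseteq> Z" and s: "s \<in> Tup Dom X"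
    and sa: "\<forall>A\<in>X-W. s A = d A"
  shows "(restrict (ext0 d W Z u) X = s) = (restrict u (X \<inter> W) = restrict s (X \<inter> W))"
proof
  assume h: "restrict (ext0 d W Z u) X = s"
  show "restrict u (X \<inter> W) = restrict s (X \<inter> W)"
  proof
    fix A
    have "restrict (ext0 d W Z u) X A = s A" using h by simp
    then show "restrict u (X \<inter> W) A = restrict s (X \<inter> W) A"
      using XZ by (auto simp: ext0_def)
  qed
next
  assume h: "restrict u (X \<inter> W) = restrict s (X \<inter> W)"
  show "restrict (ext0 d W Z u) X = s"
  proof
    fix A
    have hA: "restrict u (X \<inter> W) A = restrict s (X \<inter> W) A" using h by simp
    show "restrict (ext0 d W Z u) X A = s A"
      using XZ hA sa PiE_arb[of s X Dom A] s by (auto simp: ext0_def Tup_def)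
  qed
qed

lemma marginal_lift:
  assumes d: "\<forall>A. d A \<in> Dom A" and XZ: "X \<subseteq> Z" and R: "is_krel Dom (Z \<inter> W) R"
  shows "marginal (lift Dom d W Z R) X = lift Dom d W X (marginal R (X \<inter> W))"
proof
  fix s
  let ?e = "ext0 d W Z"
  have RT: "supp R \<subseteq> Tup Dom (Z \<inter> W)" using R by (simp add: is_krel_def)
  have "marginal (lift Dom d W Z R) X s = sum (lift Dom d W Z R) {t \<in> ?e ` supp R. restrict t X = s}"
    unfolding marginal_def supp_lift[OF d RT] by simp
  also have "{t \<in> ?e ` supp R. restrict t X = s} = ?e ` {u\<in>supp R. restrict (?e u) X = s}" by auto
  also have "sum (lift Dom d W Z R) (?e ` {u\<in>supp R. restrict (?e u) X = s})
      = sum (\<lambda>u. lift Dom d W Z R (?e u)) {u\<in>supp R. restrict (?e u) X = s}"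
  proof -
    have "inj_on ?e {u\<in>supp R. restrict (?e u) X = s}"
      by (rule inj_on_subset[OF inj_ext0]) (use RT in blast)
    then show ?thesis by (simp add: sum.reindex)
  qed
  also have "\<dots> = sum R {u\<in>supp R. restrict (?e u) X = s}"
    by (rule sum.cong[OF refl]) (use RT lift_ext0[OF d] in blast)
  finally have eq: "marginal (lift Dom d W Z R) X s = sum R {u\<in>supp R. restrict (?e u) X = s}" .
  show "marginal (lift Dom d W Z R) X s = lift Dom d W X (marginal R (X \<inter> W)) s"
  proof (cases "s \<in> Tup Dom X \<and> (\<forall>A\<in>X-W. s A = d A)")
    case True
    have "{u\<in>supp R. restrict (?e u) X = s} = {u\<in>supp R. restrict u (X \<inter> W) = restrict s (X \<inter> W)}"
      using key_ext0[OF _ XZ, of _ Dom W s d] True RT by blast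
    then show ?thesis using eq True unfolding lift_def marginal_def by simp
  next
    case False
    have emp: "{u\<in>supp R. restrict (?e u) X = s} = {}"
    proof (rule ccontr)
      assume "{u\<in>supp R. restrict (?e u) X = s} \<noteq> {}"
      then obtain u where u: "u \<in> supp R" "restrict (?e u) X = s" by blast
      have "?e u \<in> Tup Dom Z" using ext0_Tup[OF d] u(1) RT by blast
      then have "s \<in> Tup Dom X" using u(2) XZ by (auto simp: Tup_def PiE_iff)
      moreover have "\<forall>A\<in>X-W. s A = d A" using u(2) XZ by (auto simp: ext0_def)
      ultimately show False using False by blast
    qed
    have "marginal (lift Dom d W Z R) X s = 0" using eq unfolding emp by (simp only: sum.empty)
    moreover have "lift Dom d W X (marginal R (X \<inter> W)) s = 0" using False unfolding lift_def by auto
    ultimately show ?thesis by simp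
  qed
qed

lemma lift_scale: "lift Dom d W X (\<lambda>u. a * R u) t = (a::'k::semiring_0) * lift Dom d W X R t"
  unfolding lift_def by simp

lemma equiv_lift:
  fixes R S :: "('a \<Rightarrow> 'v) \<Rightarrow> 'k::comm_semiring_1"
  assumes "krel_equiv R S"
  shows "krel_equiv (lift Dom d W X R) (lift Dom d W X S)"
proof -
  obtain a b where ab: "a \<noteq> 0" "b \<noteq> 0" "\<forall>t. a * R t = b * S t"
    using assms unfolding krel_equiv_def by blast
  have "(\<lambda>t. a * R t) = (\<lambda>t. b * S t)" using ab by auto
  then have "a * lift Dom d W X R t = b * lift Dom d W X S t" for t
    using lift_scale[of Dom d W X a R t] lift_scale[of Dom d W X b S t] by simp
  then show ?thesis using ab unfolding krel_equiv_def by blast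
qed

lemma lift_self:
  assumes d: "\<forall>A. d A \<in> Dom A" and R: "is_krel Dom (X \<inter> W) R"
  shows "marginal (lift Dom d W X R) (X \<inter> W) = R"
proof -
  have R': "is_krel Dom (X \<inter> W) R" using R by simp
  have "marginal (lift Dom d W X R) (X \<inter> W) = lift Dom d W (X \<inter> W) (marginal R (X \<inter> W \<inter> W))"
    by (rule marginal_lift[OF d _ R]) auto
  also have "X \<inter> W \<inter> W = X \<inter> W" by auto
  also have "marginal R (X \<inter> W) = R" by (rule marginal_self[OF R])
  also have "lift Dom d W (X \<inter> W) R = R"
  proof
    fix t
    show "lift Dom d W (X \<inter> W) R t = R t"
    proof (cases "t \<in> Tup Dom (X \<inter> W)")
      case True
      then have "restrict t (X \<inter> W \<inter> W) = t"
        by (simp add: Tup_def PiE_def extensional_restrict Int_absorb2)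
      then show ?thesis using True unfolding lift_def by auto
    next
      case False
      then have "R t = 0" using R unfolding is_krel_def supp_def by blast
      then show ?thesis using False unfolding lift_def by simp
    qed
  qed
  finally show ?thesis .
qed

lemma cons_lift:
  fixes R S :: "('a \<Rightarrow> 'v) \<Rightarrow> 'k::comm_semiring_1"
  assumes d: "\<forall>A. d A \<in> Dom A" and c: "consistent Dom (X \<inter> W) R (Y \<inter> W) S"
  shows "consistent Dom X (lift Dom d W X R) Y (lift Dom d W Y S)"
proof -
  obtain T where T: "is_krel Dom ((X \<inter> W) \<union> (Y \<inter> W)) T" "krel_equiv R (marginal T (X \<inter> W))"
      "krel_equiv S (marginal T (Y \<inter> W))"
    using c unfolding consistent_def by blast
  have eqs: "(X \<union> Y) \<inter> W = (X \<inter> W) \<union> (Y \<inter> W)" by auto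
  have T': "is_krel Dom ((X \<union> Y) \<inter> W) T" using T(1) eqs by simp
  have "is_krel Dom (X \<union> Y) (lift Dom d W (X \<union> Y) T)" by (rule krel_lift[OF d T'])
  moreover have "marginal (lift Dom d W (X \<union> Y) T) X = lift Dom d W X (marginal T (X \<inter> W))"
    by (rule marginal_lift[OF d _ T']) auto
  moreover have "marginal (lift Dom d W (X \<union> Y) T) Y = lift Dom d W Y (marginal T (Y \<inter> W))"
    by (rule marginal_lift[OF d _ T']) auto
  ultimately show ?thesis unfolding consistent_def using equiv_lift T(2,3) by metis
qed

definition ind :: "('a \<Rightarrow> 'v) \<Rightarrow> 'k::{zero,one}" where
  "ind u = (if u = (\<lambda>_. undefined) then 1 else 0)"

lemma krel_ind: "is_krel Dom {} ind"
proof -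
  have "supp ind \<subseteq> {\<lambda>_. undefined}" unfolding supp_def ind_def by auto
  moreover have "finite (supp ind)" by (rule finite_subset[OF calculation]) simp
  ultimately show ?thesis unfolding is_krel_def Tup_def by simp
qed

lemma cons_ind_ind: "consistent Dom {} (ind :: ('a \<Rightarrow> 'v) \<Rightarrow> 'k::comm_semiring_1) {} ind"
proof -
  have m: "marginal (ind :: ('a \<Rightarrow> 'v) \<Rightarrow> 'k) {} = ind" by (rule marginal_self[OF krel_ind])
  have "krel_equiv (ind :: ('a \<Rightarrow> 'v) \<Rightarrow> 'k) ind" unfolding krel_equiv_def
    by (rule exI[of _ 1], rule exI[of _ 1]) simp
  then show ?thesis unfolding consistent_def using m krel_ind[of Dom] by auto
qed

lemma cons_ind:
  fixes S :: "('a \<Rightarrow> 'v) \<Rightarrow> 'k::comm_semiring_1"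
  assumes pos: "positive_semiring TYPE('k)" and S: "is_krel Dom Y S" and nz: "supp S \<noteq> {}"
  shows "consistent Dom {} ind Y S"
proof -
  define s where "s = sum S (supp S)"
  have s0: "s \<noteq> 0" unfolding s_def
    by (rule sum_nonzero[OF pos]) (use S nz in \<open>auto simp: is_krel_def supp_def\<close>)
  have rE: "restrict r {} = (\<lambda>_. undefined)" for r :: "'a \<Rightarrow> 'v" by (simp add: restrict_def)
  have m0: "marginal S {} u = (if u = (\<lambda>_. undefined) then s else 0)" for u
    unfolding marginal_def s_def rE by auto
  have "s * ind u = 1 * marginal S {} u" for u unfolding m0 ind_def by simp
  then have e1: "krel_equiv ind (marginal S {})" unfolding krel_equiv_def using s0
    by (intro exI[of _ s] exI[of _ 1]) simp
  have e2: "krel_equiv S (marginal S Y)" unfolding marginal_self[OF S] krel_equiv_def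
    by (rule exI[of _ 1], rule exI[of _ 1]) simp
  show ?thesis unfolding consistent_def using S e1 e2 by auto
qed

theorem lemma15:
  fixes Dom :: "'a \<Rightarrow> 'v set" and V :: "'a set" and E :: "'a set set" and W :: "'a set"
  assumes "positive_semiring TYPE('k::comm_semiring_1)"
    and "\<forall>A. Dom A \<noteq> {}"
    and "hypergraph V E"
    and "local_to_global TYPE('k) Dom V E"
    and "W \<subseteq> V"
  shows "local_to_global TYPE('k) Dom W (induced_edges E W)"
proof -
  note pos = assms(1)
  define d where "d A = (SOME x. x \<in> Dom A)" for A
  have d: "\<forall>A. d A \<in> Dom A" unfolding d_def using assms(2) by (simp add: some_in_eq)
  show ?thesis unfolding local_to_global_def
  proof (intro allI impI)
    fix Rs' :: "'a set \<Rightarrow> ('a \<Rightarrow> 'v) \<Rightarrow> 'k"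
    assume kr: "\<forall>X\<in>induced_edges E W. is_krel Dom X (Rs' X)"
      and cons: "\<forall>X\<in>induced_edges E W. \<forall>Y\<in>induced_edges E W. consistent Dom X (Rs' X) Y (Rs' Y)"
    show "\<exists>T. is_krel Dom (\<Union>(induced_edges E W)) T \<and>
            (\<forall>X\<in>induced_edges E W. krel_equiv (Rs' X) (marginal T X))"
    proof (cases "\<exists>Z0\<in>induced_edges E W. supp (Rs' Z0) \<noteq> {}")
      case False
      then have z: "Rs' X t = 0" if "X \<in> induced_edges E W" for X t
        using that unfolding supp_def by blast
      have "is_krel Dom (\<Union>(induced_edges E W)) (\<lambda>_. 0::'k)" by (simp add: is_krel_def supp_def)
      moreover have "krel_equiv (Rs' X) (marginal (\<lambda>_. 0::'k) X)" if "X \<in> induced_edges E W" for X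
      proof -
        have "\<forall>t. 1 * Rs' X t = 1 * marginal (\<lambda>_. 0::'k) X t"
          using z[OF that] by (simp add: marginal_def supp_def)
        then show ?thesis unfolding krel_equiv_def using one_neq_zero by blast
      qed
      ultimately show ?thesis by blast
    next
      case True
      then obtain Z0 where Z0: "Z0 \<in> induced_edges E W" "supp (Rs' Z0) \<noteq> {}" by blast
      have nz: "supp (Rs' Z) \<noteq> {}" if "Z \<in> induced_edges E W" for Z
        using zero_cons[OF pos cons[rule_format, OF that Z0(1)]] Z0(2) by blast
      define G where "G Z = (if Z = {} then ind else Rs' Z)" for Z
      have IEchar: "X \<inter> W \<in> induced_edges E W" if "X \<in> E" "X \<inter> W \<noteq> {}" for X
        using that by (auto simp: induced_edges_def)
      have Gk: "is_krel Dom (X \<inter> W) (G (X \<inter> W))" if "X \<in> E" for X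
      proof (cases "X \<inter> W = {}")
        case True then show ?thesis using krel_ind by (simp add: G_def)
      next
        case False then show ?thesis using kr IEchar[OF that False] by (simp add: G_def)
      qed
      have Gc: "consistent Dom (X \<inter> W) (G (X \<inter> W)) (Y \<inter> W) (G (Y \<inter> W))"
        if XY: "X \<in> E" "Y \<in> E" for X Y
      proof (cases "X \<inter> W = {}")
        case True
        show ?thesis
        proof (cases "Y \<inter> W = {}")
          case True2: True
          show ?thesis using True True2 cons_ind_ind by (simp add: G_def)
        next
          case False
          have "consistent Dom {} ind (Y \<inter> W) (Rs' (Y \<inter> W))"
            by (rule cons_ind[OF pos]) (use kr nz IEchar[OF XY(2) False] in blast)+
          then show ?thesis using True False by (simp add: G_def)
        qed
      next
        case False
        show ?thesis
        proof (cases "Y \<inter> W = {}")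
          case True
          have "consistent Dom {} ind (X \<inter> W) (Rs' (X \<inter> W))"
            by (rule cons_ind[OF pos]) (use kr nz IEchar[OF XY(1) False] in blast)+
          then show ?thesis using True False consistent_sym by (simp add: G_def)
        next
          case False2: False
          show ?thesis using cons IEchar[OF XY(1) False] IEchar[OF XY(2) False2] False False2
            by (simp add: G_def)
        qed
      qed
      define Rs where "Rs X = lift Dom d W X (G (X \<inter> W))" for X
      have Rsk: "\<forall>X\<in>E. is_krel Dom X (Rs X)"
        unfolding Rs_def using krel_lift[OF d] Gk by blast
      have Rsc: "\<forall>X\<in>E. \<forall>Y\<in>E. consistent Dom X (Rs X) Y (Rs Y)"
        unfolding Rs_def using cons_lift[OF d] Gc by blast
      have "\<exists>T. is_krel Dom (\<Union>E) T \<and> (\<forall>X\<in>E. krel_equiv (Rs X) (marginal T X))"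
        using assms(4) Rsk Rsc unfolding local_to_global_def by blast
      then obtain T where T: "is_krel Dom (\<Union>E) T" "\<forall>X\<in>E. krel_equiv (Rs X) (marginal T X)"
        by blast
      define TT where "TT = marginal T (\<Union>E \<inter> W)"
      have UIE: "\<Union>(induced_edges E W) = \<Union>E \<inter> W" by (auto simp: induced_edges_def)
      have finT: "finite (supp T)" using T(1) by (simp add: is_krel_def)
      show ?thesis
      proof (intro exI conjI ballI)
        show "is_krel Dom (\<Union>(induced_edges E W)) TT"
          unfolding UIE TT_def by (rule marginal_krel[OF T(1)]) auto
        fix Z assume Z: "Z \<in> induced_edges E W"
        then obtain X where X: "X \<in> E" "Z = X \<inter> W" by (auto simp: induced_edges_def)
        have "marginal TT Z = marginal T Z"
          unfolding TT_def by (rule marginal_trans[OF finT]) (use X in auto)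
        also have "\<dots> = marginal (marginal T X) Z"
          by (rule marginal_trans[OF finT, symmetric]) (use X in auto)
        finally have e1: "marginal TT Z = marginal (marginal T X) Z" .
        have "finite (supp (Rs X))" using Rsk X(1) by (simp add: is_krel_def)
        then have "krel_equiv (marginal (Rs X) Z) (marginal (marginal T X) Z)"
          using equiv_marginal finite_supp_marginal[OF finT] T(2) X(1) by blast
        moreover have "marginal (Rs X) Z = G Z"
          unfolding Rs_def X(2) by (rule lift_self[OF d Gk[OF X(1)]])
        moreover have "Z \<noteq> {}" using Z by (simp add: induced_edges_def)
        ultimately show "krel_equiv (Rs' Z) (marginal TT Z)" using e1 by (simp add: G_def)
      qed
    qed
  qed
qed

end
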